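(* Let $p$ be an integer with $1\le p\le13$. There exist constants $c,C>0$ such that for every polynomial $\eta\in\mathbf P^p([-1,1])$ with $\eta(-1)=0$ there exists $\psi\in\mathbf P^{p-1}([-1,1])$ with $\psi(1)=\eta(1)$, $$J(\psi;\eta):=\int_{-1}^1\Big(\eta\psi-\frac14(\eta-\psi)^2\Big)dx\ge c\int_{-1}^1\eta^2\,dx,\qquad\int_{-1}^1\psi^2\,dx\le C\int_{-1}^1\eta^2\,dx.$$
   Context: $\mathbf P^q([-1,1])$ denotes the space of real polynomials of degree at most $q$ on $[-1,1]$. *)

theory Defs
  imports "HOL-Analysis.Analysis" "HOL-Computational_Algebra.Polynomial"
begin

definition J_funct :: "real poly \<Rightarrow> real poly \<Rightarrow> real" where
  "J_funct \<psi> \<eta> = integral {-1..1}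
     (\<lambda>x. poly \<eta> x * poly \<psi> x - (1/4) * (poly \<eta> x - poly \<psi> x)^2)"

end

theory Submission
  imports Defs
begin


definition Body :: "nat \<Rightarrow> bool" where
  "Body p = (\<exists>c C :: real. c > 0 \<and> C > 0 \<and>
    (\<forall>\<eta> :: real poly. degree \<eta> \<le> p \<and> poly \<eta> (-1) = 0 \<longrightarrow>
      (\<exists>\<psi> :: real poly. degree \<psi> \<le> p - 1 \<and> poly \<psi> 1 = poly \<eta> 1 \<and>
        J_funct \<psi> \<eta> \<ge> c * integral {-1..1} (\<lambda>x. (poly \<eta> x)^2) \<and>
        integral {-1..1} (\<lambda>x. (poly \<psi> x)^2) \<le> C * integral {-1..1} (\<lambda>x. (poly \<eta> x)^2))))"

definition ip :: "real poly \<Rightarrow> real poly \<Rightarrow> real" where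
  "ip f g = integral {-1..1} (\<lambda>x. poly f x * poly g x)"

definition mom :: "nat \<Rightarrow> real" where
  "mom n = (if even n then 2 / real (n+1) else 0)"

lemma intg_pp: "(\<lambda>x. poly f x * poly g x) integrable_on {-1..1::real}"
  by (intro integrable_continuous_real continuous_intros)

lemma intg_p: "(\<lambda>x. poly f x) integrable_on {-1..1::real}"
  by (intro integrable_continuous_real continuous_intros)

lemma ip_comm: "ip f g = ip g f"
  unfolding ip_def by (simp add: mult.commute)

lemma ip_add: "ip (f + g) h = ip f h + ip g h"
  unfolding ip_def by (simp add: distrib_right integral_add intg_pp)

lemma ip_diff: "ip (f - g) h = ip f h - ip g h"
  unfolding ip_def by (simp add: left_diff_distrib integral_diff intg_pp)

lemma ip_smult: "ip (smult c f) h = c * ip f h"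
  unfolding ip_def by (simp add: mult.assoc)

lemma ip_nonneg: "ip f f \<ge> 0"
  unfolding ip_def by (rule integral_nonneg) (auto intro: intg_pp)

lemma int_power: "integral {-1..1::real} (\<lambda>x. x ^ n) = mom n"
proof -
  have d: "((\<lambda>x. x^Suc n / real (Suc n)) has_real_derivative x^n) (at x)" for x :: real
    using DERIV_cdivide[OF DERIV_pow[of "Suc n" x], of "real (Suc n)"] by simp
  have "((\<lambda>x. x ^ n) has_integral ((1::real)^(Suc n)/(Suc n) - (-1)^(Suc n)/(Suc n))) {-1..1}"
    apply (rule fundamental_theorem_of_calculus)
     apply simp
    unfolding has_real_derivative_iff_has_vector_derivative[symmetric]
    using has_field_derivative_at_within[OF d] by blast
  hence "integral {-1..1::real} (\<lambda>x. x ^ n) = ((1::real)^(Suc n)/(Suc n) - (-1)^(Suc n)/(Suc n))"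
    by (rule integral_unique)
  also have "\<dots> = mom n" unfolding mom_def by (cases "even n") (auto simp: diff_divide_distrib[symmetric])
  finally show ?thesis .
qed

lemma poly_sum_bound: fixes q :: "real poly" assumes "\<forall>j\<ge>n. coeff q j = 0"
  shows "poly q x = (\<Sum>j<n. coeff q j * x ^ j)"
proof -
  have "poly q x = (\<Sum>j\<le>degree q. coeff q j * x ^ j)" by (simp add: poly_altdef)
  also have "\<dots> = (\<Sum>j<max n (Suc (degree q)). coeff q j * x ^ j)"
    by (rule sum.mono_neutral_left) (auto simp: coeff_eq_0)
  also have "\<dots> = (\<Sum>j<n. coeff q j * x ^ j)"
    by (rule sum.mono_neutral_right) (auto simp: coeff_eq_0 assms)
  finally show ?thesis .
qed

lemma int_xpow_poly: fixes q :: "real poly" assumes "\<forall>j\<ge>m. coeff q j = 0"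
  shows "integral {-1..1} (\<lambda>x. x ^ i * poly q x) = (\<Sum>j<m. coeff q j * mom (i+j))"
proof -
  have "integral {-1..1} (\<lambda>x. x ^ i * poly q x) = integral {-1..1} (\<lambda>x. \<Sum>j<m. coeff q j * x ^ (i+j))"
    using poly_sum_bound[OF assms] by (simp add: sum_distrib_left power_add mult_ac)
  also have "\<dots> = (\<Sum>j<m. integral {-1..1} (\<lambda>x. coeff q j * x ^ (i+j)))"
    by (rule integral_sum) (auto intro!: integrable_continuous_real continuous_intros)
  also have "\<dots> = (\<Sum>j<m. coeff q j * mom (i+j))"
    by (simp add: int_power)
  finally show ?thesis .
qed

lemma ip_check: assumes "\<forall>j\<ge>m. coeff q j = 0" and "\<forall>j\<ge>n. coeff v j = 0"
  and "\<forall>i<n. (\<Sum>j<m. coeff q j * mom (i+j)) = t i"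
  shows "ip v q = (\<Sum>i<n. coeff v i * t i)"
proof -
  have "ip v q = integral {-1..1} (\<lambda>x. \<Sum>i<n. coeff v i * (x ^ i * poly q x))"
    unfolding ip_def using poly_sum_bound[OF assms(2)] by (simp add: sum_distrib_left mult_ac)
  also have "\<dots> = (\<Sum>i<n. integral {-1..1} (\<lambda>x. coeff v i * (x ^ i * poly q x)))"
    by (rule integral_sum) (auto intro!: integrable_continuous_real continuous_intros)
  also have "\<dots> = (\<Sum>i<n. coeff v i * t i)"
    using assms(3) by (simp add: int_xpow_poly[OF assms(1)])
  finally show ?thesis .
qed

lemma ip_add_r: "ip h (f + g) = ip h f + ip h g"
  by (metis ip_add ip_comm)
lemma ip_diff_r: "ip h (f - g) = ip h f - ip h g"
  by (metis ip_diff ip_comm)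
lemma ip_smult_r: "ip h (smult c f) = c * ip h f"
  by (metis ip_smult ip_comm)

lemmas ip_simps = ip_add ip_diff ip_smult ip_add_r ip_diff_r ip_smult_r

lemma J_ip: "J_funct \<psi> \<eta> = ip \<eta> \<psi> - 1/4 * ip (\<eta> - \<psi>) (\<eta> - \<psi>)"
proof -
  have "J_funct \<psi> \<eta> = integral {-1..1} (\<lambda>x. poly \<eta> x * poly \<psi> x) -
          integral {-1..1} (\<lambda>x. 1/4 * (poly (\<eta> - \<psi>) x * poly (\<eta> - \<psi>) x))"
    unfolding J_funct_def
    by (subst integral_diff[symmetric]) (auto intro!: integrable_continuous_real continuous_intros simp: power2_eq_square)
  thus ?thesis unfolding ip_def by simp
qed

lemma sq_ip: "integral {-1..1} (\<lambda>x. (poly \<eta> x)^2) = ip \<eta> \<eta>"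
  unfolding ip_def by (simp add: power2_eq_square)


fun chk :: "real list \<Rightarrow> nat \<Rightarrow> real" where
  "chk [] i = 0" | "chk (c#cs) i = c * mom i + chk cs (Suc i)"

lemma chk_sum: "chk cl i = (\<Sum>j<length cl. cl!j * mom (i+j))"
proof (induction cl arbitrary: i)
  case Nil thus ?case by simp
next
  case (Cons c cs)
  show ?case by (simp add: Cons sum.lessThan_Suc_shift del: sum.lessThan_Suc)
qed

fun ipl :: "real list \<Rightarrow> nat \<Rightarrow> real list \<Rightarrow> real" where
  "ipl [] s b = 0" | "ipl (c#cs) s b = c * chk b s + ipl cs (Suc s) b"

lemma ipl_sum: "ipl a s b = (\<Sum>i<length a. a!i * chk b (s+i))"
proof (induction a arbitrary: s)
  case Nil thus ?case by simp
next
  case (Cons c cs)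
  show ?case by (simp add: Cons sum.lessThan_Suc_shift del: sum.lessThan_Suc)
qed

lemma deg_Poly: "length xs \<le> Suc n \<Longrightarrow> degree (Poly xs) \<le> n"
  by (rule degree_le) (auto simp: nth_default_def)

lemma check_Poly:
  assumes "list_all (\<lambda>i. chk cl i = t i) [0..<n]" "1 \<le> n" "degree v \<le> n - 1"
  shows "ip v (Poly cl) = (\<Sum>i<n. coeff v i * t i)"
proof (rule ip_check[where m="length cl"])
  show "\<forall>j\<ge>length cl. coeff (Poly cl) j = 0" by (auto simp: nth_default_def)
  show "\<forall>j\<ge>n. coeff v j = 0" using assms(2,3) by (auto intro: coeff_eq_0)
  show "\<forall>i<n. (\<Sum>j<length cl. coeff (Poly cl) j * mom (i + j)) = t i"
    using assms(1) by (auto simp: list_all_iff chk_sum nth_default_def)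
qed

lemma orth_Poly: "list_all (\<lambda>i. chk cl i = 0) [0..<n] \<Longrightarrow> 1 \<le> n \<Longrightarrow> degree v \<le> n - 1 \<Longrightarrow> ip v (Poly cl) = 0"
  using check_Poly[where t="\<lambda>i. 0"] by simp

lemma coeff_hi: "1 \<le> n \<Longrightarrow> degree v \<le> n - 1 \<Longrightarrow> \<forall>j\<ge>n. coeff (v::real poly) j = 0"
  by (auto intro: coeff_eq_0)

lemma rep1_Poly: "list_all (\<lambda>i. chk cl i = 1) [0..<n] \<Longrightarrow> 1 \<le> n \<Longrightarrow> degree v \<le> n - 1 \<Longrightarrow> ip v (Poly cl) = poly v 1"
  using check_Poly[where t="\<lambda>i. 1"] poly_sum_bound[OF coeff_hi, of n v 1] by simp

lemma repm_Poly: "list_all (\<lambda>i. chk cl i = (-1)^i) [0..<n] \<Longrightarrow> 1 \<le> n \<Longrightarrow> degree v \<le> n - 1 \<Longrightarrow> ip v (Poly cl) = poly v (-1)"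
  using check_Poly[where t="\<lambda>i. (-1)^i"] poly_sum_bound[OF coeff_hi, of n v "-1"] by (simp add: mult.commute)

lemma ip_Poly: "a \<noteq> [] \<Longrightarrow> ip (Poly a) (Poly b) = ipl a 0 b"
proof -
  assume a: "a \<noteq> []"
  have "ip (Poly a) (Poly b) = (\<Sum>i<length a. coeff (Poly a) i * chk b i)"
    by (rule check_Poly) (use a in \<open>auto simp: list_all_iff Suc_le_eq intro: deg_Poly\<close>)
  thus ?thesis by (simp add: ipl_sum nth_default_def)
qed

lemma generic:
  fixes p :: nat and L k km :: "real poly" and c K Kx Km lp lm h :: real
    and al be :: "real \<Rightarrow> real \<Rightarrow> real"
  assumes p1: "1 \<le> p"
    and L_deg: "degree L \<le> p" and L_lead: "coeff L p \<noteq> 0"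
    and L_orth: "\<And>v. degree v \<le> p-1 \<Longrightarrow> ip v L = 0"
    and k_deg: "degree k \<le> p-1" and km_deg: "degree km \<le> p-1"
    and k_rep: "\<And>v. degree v \<le> p-1 \<Longrightarrow> ip v k = poly v 1"
    and km_rep: "\<And>v. degree v \<le> p-1 \<Longrightarrow> ip v km = poly v (-1)"
    and vK: "poly k 1 = K" and vK2: "poly km 1 = Kx" and vKm: "poly km (-1) = Km"
    and vl1: "poly L 1 = lp" and vlm: "poly L (-1) = lm" and vh: "ip L L = h"
    and Kpos: "K > 0" and hpos: "h > 0" and cpos: "c > 0" and c2: "c \<le> 2"
    and Q: "\<And>x a. (2-c)*(2*al x a*x + 2*be x a*(-a*lm) - ((al x a)^2*K + 2*al x a*be x a*Kx + (be x a)^2*Km))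
               - (a*lp - 2*x)^2/(4*K) - a^2*h/4 - c*a^2*h \<ge> 0"
  shows "Body p"
proof -
  define D where "D = 8*lp^2/(K*h)"
  have D0: "D \<ge> 0" unfolding D_def using Kpos hpos by simp
  define C where "C = 44 + D"
  show ?thesis unfolding Body_def
  proof (rule exI[of _ c], rule exI[of _ C], intro conjI allI impI)
  show "c > 0" by (rule cpos)
  show "C > 0" unfolding C_def using D0 by simp
  fix \<eta> :: "real poly"
  assume eta: "degree \<eta> \<le> p \<and> poly \<eta> (-1) = 0"
  define a where "a = coeff \<eta> p / coeff L p"
  define u where "u = \<eta> - smult a L"
  have eta_eq: "\<eta> = u + smult a L" unfolding u_def by simp
  have "\<forall>i>p-1. coeff u i = 0"
  proof (intro allI impI)
    fix i assume "i > p - 1"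
    hence "i = p \<or> i > p" using p1 by linarith
    thus "coeff u i = 0"
    proof
      assume "i = p" thus ?thesis unfolding u_def a_def using L_lead by simp
    next
      assume "i > p" thus ?thesis unfolding u_def using L_deg eta by (simp add: coeff_eq_0)
    qed
  qed
  hence udeg: "degree u \<le> p - 1" by (rule degree_le)
  define x where "x = poly u 1"
  define y where "y = poly u (-1)"
  define N where "N = ip u u"
  have y_eq: "y = -a*lm" using eta unfolding y_def using vlm by (simp add: eta_eq)
  have eta1: "poly \<eta> 1 = x + a*lp" unfolding x_def using vl1 by (simp add: eta_eq)
  define d where "d = a*lp - 2*x"
  define \<psi> where "\<psi> = smult 3 u + smult (d/K) k"
  have psideg: "degree \<psi> \<le> p - 1" unfolding \<psi>_def
    by (intro degree_add_le order.trans[OF degree_smult_le] udeg k_deg)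
  have psi1: "poly \<psi> 1 = poly \<eta> 1" unfolding \<psi>_def eta1 d_def x_def using vK Kpos by simp
  have uL: "ip u L = 0" using L_orth[OF udeg] .
  have kL: "ip k L = 0" using L_orth[OF k_deg] .
  have uk: "ip u k = x" using k_rep[OF udeg] x_def by simp
  have ukm: "ip u km = y" using km_rep[OF udeg] y_def by simp
  have kk: "ip k k = K" using k_rep[OF k_deg] vK by simp
  have kkm: "ip k km = Kx" using k_rep[OF km_deg] vK2 ip_comm by metis
  have kmkm: "ip km km = Km" using km_rep[OF km_deg] vKm by simp
  have ee: "ip \<eta> \<eta> = N + a^2*h"
    unfolding eta_eq by (simp add: ip_simps uL ip_comm[of L u] vh N_def power2_eq_square)
  have ep: "ip \<eta> \<psi> = 3*N + (d/K)*x"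
    unfolding eta_eq \<psi>_def by (simp add: ip_simps uL kL ip_comm[of L u] ip_comm[of L k] uk N_def)
  have pp: "ip \<psi> \<psi> = 9*N + 6*(d/K)*x + (d/K)^2*K"
    unfolding \<psi>_def by (simp add: ip_simps uk kk ip_comm[of k u] N_def power2_eq_square algebra_simps)
  have J: "J_funct \<psi> \<eta> = 2*N - d^2/(4*K) - a^2*h/4"
  proof -
    have "J_funct \<psi> \<eta> = ip \<eta> \<psi> - 1/4 * (ip \<eta> \<eta> - 2 * ip \<eta> \<psi> + ip \<psi> \<psi>)"
      unfolding J_ip by (simp add: ip_simps ip_comm[of \<psi> \<eta>])
    also have "\<dots> = 2*N - d^2/(4*K) - a^2*h/4"
      unfolding ee ep pp using Kpos by (simp add: field_simps power2_eq_square)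
    finally show ?thesis .
  qed
  define \<alpha> where "\<alpha> = al x a"
  define \<beta> where "\<beta> = be x a"
  have low: "N \<ge> 2*\<alpha>*x + 2*\<beta>*y - (\<alpha>^2*K + 2*\<alpha>*\<beta>*Kx + \<beta>^2*Km)"
  proof -
    have "0 \<le> ip (u - smult \<alpha> k - smult \<beta> km) (u - smult \<alpha> k - smult \<beta> km)" by (rule ip_nonneg)
    also have "\<dots> = N - 2*\<alpha>*x - 2*\<beta>*y + (\<alpha>^2*K + 2*\<alpha>*\<beta>*Kx + \<beta>^2*Km)"
      by (simp add: ip_simps uk ukm kk kkm kmkm ip_comm[of k u] ip_comm[of km u] ip_comm[of km k]
            N_def power2_eq_square algebra_simps)
    finally show ?thesis by simp
  qed
  have Qx: "(2-c)*(2*\<alpha>*x + 2*\<beta>*(-a*lm) - (\<alpha>^2*K + 2*\<alpha>*\<beta>*Kx + \<beta>^2*Km))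
               - (a*lp - 2*x)^2/(4*K) - a^2*h/4 - c*a^2*h \<ge> 0"
    using Q[of x a] unfolding \<alpha>_def \<beta>_def .
  have "(2-c)*N \<ge> (2-c)*(2*\<alpha>*x + 2*\<beta>*(-a*lm) - (\<alpha>^2*K + 2*\<alpha>*\<beta>*Kx + \<beta>^2*Km))"
    using low c2 y_eq by (intro mult_left_mono) auto
  hence "J_funct \<psi> \<eta> \<ge> c * ip \<eta> \<eta>"
    unfolding J ee d_def using Qx by (simp add: algebra_simps)
  moreover have "ip \<psi> \<psi> \<le> C * ip \<eta> \<eta>"
  proof -
    have x2: "x^2 \<le> K*N"
    proof -
      have "0 \<le> ip (u - smult (x/K) k) (u - smult (x/K) k)" by (rule ip_nonneg)
      also have "\<dots> = N - x^2/K"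
        using Kpos by (simp add: ip_simps uk kk ip_comm[of k u] N_def power2_eq_square field_simps)
      finally have "x^2/K \<le> N" by simp
      thus ?thesis using Kpos by (simp add: field_simps)
    qed
    have d2: "d^2 \<le> 2*a^2*lp^2 + 8*x^2" unfolding d_def
      using sum_squares_ge_zero[of "a*lp + 2*x" 0] by (simp add: power2_eq_square algebra_simps)
    have dx: "2*d*x \<le> d^2 + x^2" using sum_squares_ge_zero[of "d - x" 0] by (simp add: power2_eq_square algebra_simps)
    have "ip \<psi> \<psi> = 9*N + (3*(2*d*x) + d^2)/K" unfolding pp using Kpos by (simp add: field_simps power2_eq_square)
    also have "\<dots> \<le> 9*N + (3*(d^2 + x^2) + d^2)/K"
      using dx Kpos by (intro add_left_mono divide_right_mono) auto
    also have "\<dots> = 9*N + 3*(x^2/K) + 4*(d^2/K)" by (simp add: field_simps add_divide_distrib)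
    also have "\<dots> \<le> 9*N + 3*N + 4*((2*a^2*lp^2 + 8*x^2)/K)"
      using x2 d2 Kpos by (intro add_mono mult_left_mono divide_right_mono) (auto simp: field_simps)
    also have "\<dots> = 12*N + 8*(lp^2/K)*a^2 + 32*(x^2/K)" using Kpos by (simp add: field_simps)
    also have "\<dots> \<le> 12*N + 8*(lp^2/K)*a^2 + 32*N"
      using x2 Kpos by (simp add: field_simps)
    also have "\<dots> = 44*N + D*(a^2*h)" using hpos Kpos unfolding D_def by (simp add: field_simps)
    also have "\<dots> \<le> C * (N + a^2*h)"
    proof -
      have "0 \<le> N" unfolding N_def by (rule ip_nonneg)
      moreover have "0 \<le> a^2*h" using hpos by simp
      ultimately have "0 \<le> 44*(a^2*h) + D*N" using D0 hpos by (intro add_nonneg_nonneg mult_nonneg_nonneg) auto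
      moreover have "C * (N + a^2*h) = 44*N + D*(a^2*h) + (44*(a^2*h) + D*N)"
        unfolding C_def by (simp add: algebra_simps)
      ultimately show ?thesis by linarith
    qed
    finally show ?thesis unfolding ee .
  qed
  ultimately show "\<exists>\<psi>. degree \<psi> \<le> p - 1 \<and> poly \<psi> 1 = poly \<eta> 1 \<and>
        J_funct \<psi> \<eta> \<ge> c * integral {-1..1} (\<lambda>x. (poly \<eta> x)^2) \<and>
        integral {-1..1} (\<lambda>x. (poly \<psi> x)^2) \<le> C * integral {-1..1} (\<lambda>x. (poly \<eta> x)^2)"
    using psideg psi1 unfolding sq_ip by blast
qed
qed

lemma body_1: "Body 1"
proof (rule generic[where L="Poly ([0, 1]::real list)" and k="Poly ([(1/2)]::real list)" and km="Poly ([(1/2)]::real list)"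
   and c="(1/2)" and K="(1/2)" and Kx="(1/2)" and Km="(1/2)" and lp="1"
   and lm="(-1)" and h="(2/3)" and al="\<lambda>x a. 12*x + (-10)*a" and be="\<lambda>x a. (-10)*x + 10*a"])
  show "degree (Poly ([0, 1]::real list)) \<le> 1" by (rule deg_Poly) simp
  show "coeff (Poly ([0, 1]::real list)) 1 \<noteq> 0" unfolding coeff_Poly_eq by (simp add: nth_default_def)
  show "\<And>v. degree v \<le> 1 - 1 \<Longrightarrow> ip v (Poly ([0, 1]::real list)) = 0"
    by (rule orth_Poly[where n=1]) (code_simp, simp_all)
  show "degree (Poly ([(1/2)]::real list)) \<le> 1 - 1" by (rule deg_Poly) simp
  show "degree (Poly ([(1/2)]::real list)) \<le> 1 - 1" by (rule deg_Poly) simp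
  show "\<And>v. degree v \<le> 1 - 1 \<Longrightarrow> ip v (Poly ([(1/2)]::real list)) = poly v 1"
    by (rule rep1_Poly[where n=1]) (code_simp, simp_all)
  show "\<And>v. degree v \<le> 1 - 1 \<Longrightarrow> ip v (Poly ([(1/2)]::real list)) = poly v (-1)"
    by (rule repm_Poly[where n=1]) (code_simp, simp_all)
  show "poly (Poly ([(1/2)]::real list)) 1 = (1/2)" by simp
  show "poly (Poly ([(1/2)]::real list)) 1 = (1/2)" by simp
  show "poly (Poly ([(1/2)]::real list)) (-1) = (1/2)" by simp
  show "poly (Poly ([0, 1]::real list)) 1 = 1" by simp
  show "poly (Poly ([0, 1]::real list)) (-1) = (-1)" by simp
  show "ip (Poly ([0, 1]::real list)) (Poly ([0, 1]::real list)) = (2/3)" by (subst ip_Poly) (simp, code_simp)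
  fix x a :: real
  have "(\<lambda>x a. 12*x + (-10)*a) x a = 12*x + (-10)*a" "(\<lambda>x a. (-10)*x + 10*a) x a = (-10)*x + 10*a" by simp_all
  have "(2-(1/2))*(2*(\<lambda>x a. 12*x + (-10)*a) x a*x + 2*(\<lambda>x a. (-10)*x + 10*a) x a*(-a*(-1)) - (((\<lambda>x a. 12*x + (-10)*a) x a)^2*(1/2) + 2*(\<lambda>x a. 12*x + (-10)*a) x a*(\<lambda>x a. (-10)*x + 10*a) x a*(1/2) + ((\<lambda>x a. (-10)*x + 10*a) x a)^2*(1/2)))
               - (a*1 - 2*x)^2/(4*(1/2)) - a^2*(2/3)/4 - (1/2)*a^2*(2/3)
        = 31*(x + (-29/31)*a)^2 + (58/31)*a^2"
    by (simp add: power2_eq_square field_simps)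
  also have "\<dots> \<ge> 0" by simp
  finally show "(2-(1/2))*(2*(\<lambda>x a. 12*x + (-10)*a) x a*x + 2*(\<lambda>x a. (-10)*x + 10*a) x a*(-a*(-1)) - (((\<lambda>x a. 12*x + (-10)*a) x a)^2*(1/2) + 2*(\<lambda>x a. 12*x + (-10)*a) x a*(\<lambda>x a. (-10)*x + 10*a) x a*(1/2) + ((\<lambda>x a. (-10)*x + 10*a) x a)^2*(1/2)))
               - (a*1 - 2*x)^2/(4*(1/2)) - a^2*(2/3)/4 - (1/2)*a^2*(2/3) \<ge> 0" .
qed simp_all


lemma body_2: "Body 2"
proof (rule generic[where L="Poly ([(-1/2), 0, (3/2)]::real list)" and k="Poly ([(1/2), (3/2)]::real list)" and km="Poly ([(1/2), (-3/2)]::real list)"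
   and c="(1/2)" and K="2" and Kx="(-1)" and Km="2" and lp="1"
   and lm="1" and h="(2/5)" and al="\<lambda>x a. (2/3)*x + (-1/3)*a" and be="\<lambda>x a. (1/3)*x + (-2/3)*a"])
  show "degree (Poly ([(-1/2), 0, (3/2)]::real list)) \<le> 2" by (rule deg_Poly) simp
  show "coeff (Poly ([(-1/2), 0, (3/2)]::real list)) 2 \<noteq> 0" unfolding coeff_Poly_eq by (simp add: nth_default_def)
  show "\<And>v. degree v \<le> 2 - 1 \<Longrightarrow> ip v (Poly ([(-1/2), 0, (3/2)]::real list)) = 0"
    by (rule orth_Poly[where n=2]) (code_simp, simp_all)
  show "degree (Poly ([(1/2), (3/2)]::real list)) \<le> 2 - 1" by (rule deg_Poly) simp
  show "degree (Poly ([(1/2), (-3/2)]::real list)) \<le> 2 - 1" by (rule deg_Poly) simp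
  show "\<And>v. degree v \<le> 2 - 1 \<Longrightarrow> ip v (Poly ([(1/2), (3/2)]::real list)) = poly v 1"
    by (rule rep1_Poly[where n=2]) (code_simp, simp_all)
  show "\<And>v. degree v \<le> 2 - 1 \<Longrightarrow> ip v (Poly ([(1/2), (-3/2)]::real list)) = poly v (-1)"
    by (rule repm_Poly[where n=2]) (code_simp, simp_all)
  show "poly (Poly ([(1/2), (3/2)]::real list)) 1 = 2" by simp
  show "poly (Poly ([(1/2), (-3/2)]::real list)) 1 = (-1)" by simp
  show "poly (Poly ([(1/2), (-3/2)]::real list)) (-1) = 2" by simp
  show "poly (Poly ([(-1/2), 0, (3/2)]::real list)) 1 = 1" by simp
  show "poly (Poly ([(-1/2), 0, (3/2)]::real list)) (-1) = 1" by simp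
  show "ip (Poly ([(-1/2), 0, (3/2)]::real list)) (Poly ([(-1/2), 0, (3/2)]::real list)) = (2/5)" by (subst ip_Poly) (simp, code_simp)
  fix x a :: real
  have "(\<lambda>x a. (2/3)*x + (-1/3)*a) x a = (2/3)*x + (-1/3)*a" "(\<lambda>x a. (1/3)*x + (-2/3)*a) x a = (1/3)*x + (-2/3)*a" by simp_all
  have "(2-(1/2))*(2*(\<lambda>x a. (2/3)*x + (-1/3)*a) x a*x + 2*(\<lambda>x a. (1/3)*x + (-2/3)*a) x a*(-a*1) - (((\<lambda>x a. (2/3)*x + (-1/3)*a) x a)^2*2 + 2*(\<lambda>x a. (2/3)*x + (-1/3)*a) x a*(\<lambda>x a. (1/3)*x + (-2/3)*a) x a*(-1) + ((\<lambda>x a. (1/3)*x + (-2/3)*a) x a)^2*2))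
               - (a*1 - 2*x)^2/(4*2) - a^2*(2/5)/4 - (1/2)*a^2*(2/5)
        = (1/2)*(x + (-1/2)*a)^2 + (9/20)*a^2"
    by (simp add: power2_eq_square field_simps)
  also have "\<dots> \<ge> 0" by simp
  finally show "(2-(1/2))*(2*(\<lambda>x a. (2/3)*x + (-1/3)*a) x a*x + 2*(\<lambda>x a. (1/3)*x + (-2/3)*a) x a*(-a*1) - (((\<lambda>x a. (2/3)*x + (-1/3)*a) x a)^2*2 + 2*(\<lambda>x a. (2/3)*x + (-1/3)*a) x a*(\<lambda>x a. (1/3)*x + (-2/3)*a) x a*(-1) + ((\<lambda>x a. (1/3)*x + (-2/3)*a) x a)^2*2))
               - (a*1 - 2*x)^2/(4*2) - a^2*(2/5)/4 - (1/2)*a^2*(2/5) \<ge> 0" .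
qed simp_all


lemma body_3: "Body 3"
proof (rule generic[where L="Poly ([0, (-3/2), 0, (5/2)]::real list)" and k="Poly ([(-3/4), (3/2), (15/4)]::real list)" and km="Poly ([(-3/4), (-3/2), (15/4)]::real list)"
   and c="(1/4)" and K="(9/2)" and Kx="(3/2)" and Km="(9/2)" and lp="1"
   and lm="(-1)" and h="(2/7)" and al="\<lambda>x a. (1/4)*x + (-1/12)*a" and be="\<lambda>x a. (-1/12)*x + (1/4)*a"])
  show "degree (Poly ([0, (-3/2), 0, (5/2)]::real list)) \<le> 3" by (rule deg_Poly) simp
  show "coeff (Poly ([0, (-3/2), 0, (5/2)]::real list)) 3 \<noteq> 0" unfolding coeff_Poly_eq by (simp add: nth_default_def)
  show "\<And>v. degree v \<le> 3 - 1 \<Longrightarrow> ip v (Poly ([0, (-3/2), 0, (5/2)]::real list)) = 0"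
    by (rule orth_Poly[where n=3]) (code_simp, simp_all)
  show "degree (Poly ([(-3/4), (3/2), (15/4)]::real list)) \<le> 3 - 1" by (rule deg_Poly) simp
  show "degree (Poly ([(-3/4), (-3/2), (15/4)]::real list)) \<le> 3 - 1" by (rule deg_Poly) simp
  show "\<And>v. degree v \<le> 3 - 1 \<Longrightarrow> ip v (Poly ([(-3/4), (3/2), (15/4)]::real list)) = poly v 1"
    by (rule rep1_Poly[where n=3]) (code_simp, simp_all)
  show "\<And>v. degree v \<le> 3 - 1 \<Longrightarrow> ip v (Poly ([(-3/4), (-3/2), (15/4)]::real list)) = poly v (-1)"
    by (rule repm_Poly[where n=3]) (code_simp, simp_all)
  show "poly (Poly ([(-3/4), (3/2), (15/4)]::real list)) 1 = (9/2)" by simp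
  show "poly (Poly ([(-3/4), (-3/2), (15/4)]::real list)) 1 = (3/2)" by simp
  show "poly (Poly ([(-3/4), (-3/2), (15/4)]::real list)) (-1) = (9/2)" by simp
  show "poly (Poly ([0, (-3/2), 0, (5/2)]::real list)) 1 = 1" by simp
  show "poly (Poly ([0, (-3/2), 0, (5/2)]::real list)) (-1) = (-1)" by simp
  show "ip (Poly ([0, (-3/2), 0, (5/2)]::real list)) (Poly ([0, (-3/2), 0, (5/2)]::real list)) = (2/7)" by (subst ip_Poly) (simp, code_simp)
  fix x a :: real
  have "(\<lambda>x a. (1/4)*x + (-1/12)*a) x a = (1/4)*x + (-1/12)*a" "(\<lambda>x a. (-1/12)*x + (1/4)*a) x a = (-1/12)*x + (1/4)*a" by simp_all
  have "(2-(1/4))*(2*(\<lambda>x a. (1/4)*x + (-1/12)*a) x a*x + 2*(\<lambda>x a. (-1/12)*x + (1/4)*a) x a*(-a*(-1)) - (((\<lambda>x a. (1/4)*x + (-1/12)*a) x a)^2*(9/2) + 2*(\<lambda>x a. (1/4)*x + (-1/12)*a) x a*(\<lambda>x a. (-1/12)*x + (1/4)*a) x a*(3/2) + ((\<lambda>x a. (-1/12)*x + (1/4)*a) x a)^2*(9/2)))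
               - (a*1 - 2*x)^2/(4*(9/2)) - a^2*(2/7)/4 - (1/4)*a^2*(2/7)
        = (31/144)*(x + (-5/31)*a)^2 + (152/651)*a^2"
    by (simp add: power2_eq_square field_simps)
  also have "\<dots> \<ge> 0" by simp
  finally show "(2-(1/4))*(2*(\<lambda>x a. (1/4)*x + (-1/12)*a) x a*x + 2*(\<lambda>x a. (-1/12)*x + (1/4)*a) x a*(-a*(-1)) - (((\<lambda>x a. (1/4)*x + (-1/12)*a) x a)^2*(9/2) + 2*(\<lambda>x a. (1/4)*x + (-1/12)*a) x a*(\<lambda>x a. (-1/12)*x + (1/4)*a) x a*(3/2) + ((\<lambda>x a. (-1/12)*x + (1/4)*a) x a)^2*(9/2)))
               - (a*1 - 2*x)^2/(4*(9/2)) - a^2*(2/7)/4 - (1/4)*a^2*(2/7) \<ge> 0" .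
qed simp_all


lemma body_4: "Body 4"
proof (rule generic[where L="Poly ([(3/8), 0, (-15/4), 0, (35/8)]::real list)" and k="Poly ([(-3/4), (-15/4), (15/4), (35/4)]::real list)" and km="Poly ([(-3/4), (15/4), (15/4), (-35/4)]::real list)"
   and c="(1/4)" and K="8" and Kx="(-2)" and Km="8" and lp="1"
   and lm="1" and h="(2/9)" and al="\<lambda>x a. (2/15)*x + (-1/30)*a" and be="\<lambda>x a. (1/30)*x + (-2/15)*a"])
  show "degree (Poly ([(3/8), 0, (-15/4), 0, (35/8)]::real list)) \<le> 4" by (rule deg_Poly) simp
  show "coeff (Poly ([(3/8), 0, (-15/4), 0, (35/8)]::real list)) 4 \<noteq> 0" unfolding coeff_Poly_eq by (simp add: nth_default_def)
  show "\<And>v. degree v \<le> 4 - 1 \<Longrightarrow> ip v (Poly ([(3/8), 0, (-15/4), 0, (35/8)]::real list)) = 0"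
    by (rule orth_Poly[where n=4]) (code_simp, simp_all)
  show "degree (Poly ([(-3/4), (-15/4), (15/4), (35/4)]::real list)) \<le> 4 - 1" by (rule deg_Poly) simp
  show "degree (Poly ([(-3/4), (15/4), (15/4), (-35/4)]::real list)) \<le> 4 - 1" by (rule deg_Poly) simp
  show "\<And>v. degree v \<le> 4 - 1 \<Longrightarrow> ip v (Poly ([(-3/4), (-15/4), (15/4), (35/4)]::real list)) = poly v 1"
    by (rule rep1_Poly[where n=4]) (code_simp, simp_all)
  show "\<And>v. degree v \<le> 4 - 1 \<Longrightarrow> ip v (Poly ([(-3/4), (15/4), (15/4), (-35/4)]::real list)) = poly v (-1)"
    by (rule repm_Poly[where n=4]) (code_simp, simp_all)
  show "poly (Poly ([(-3/4), (-15/4), (15/4), (35/4)]::real list)) 1 = 8" by simp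
  show "poly (Poly ([(-3/4), (15/4), (15/4), (-35/4)]::real list)) 1 = (-2)" by simp
  show "poly (Poly ([(-3/4), (15/4), (15/4), (-35/4)]::real list)) (-1) = 8" by simp
  show "poly (Poly ([(3/8), 0, (-15/4), 0, (35/8)]::real list)) 1 = 1" by simp
  show "poly (Poly ([(3/8), 0, (-15/4), 0, (35/8)]::real list)) (-1) = 1" by simp
  show "ip (Poly ([(3/8), 0, (-15/4), 0, (35/8)]::real list)) (Poly ([(3/8), 0, (-15/4), 0, (35/8)]::real list)) = (2/9)" by (subst ip_Poly) (simp, code_simp)
  fix x a :: real
  have "(\<lambda>x a. (2/15)*x + (-1/30)*a) x a = (2/15)*x + (-1/30)*a" "(\<lambda>x a. (1/30)*x + (-2/15)*a) x a = (1/30)*x + (-2/15)*a" by simp_all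
  have "(2-(1/4))*(2*(\<lambda>x a. (2/15)*x + (-1/30)*a) x a*x + 2*(\<lambda>x a. (1/30)*x + (-2/15)*a) x a*(-a*1) - (((\<lambda>x a. (2/15)*x + (-1/30)*a) x a)^2*8 + 2*(\<lambda>x a. (2/15)*x + (-1/30)*a) x a*(\<lambda>x a. (1/30)*x + (-2/15)*a) x a*(-2) + ((\<lambda>x a. (1/30)*x + (-2/15)*a) x a)^2*8))
               - (a*1 - 2*x)^2/(4*8) - a^2*(2/9)/4 - (1/4)*a^2*(2/9)
        = (13/120)*(x + (1/26)*a)^2 + (85/936)*a^2"
    by (simp add: power2_eq_square field_simps)
  also have "\<dots> \<ge> 0" by simp
  finally show "(2-(1/4))*(2*(\<lambda>x a. (2/15)*x + (-1/30)*a) x a*x + 2*(\<lambda>x a. (1/30)*x + (-2/15)*a) x a*(-a*1) - (((\<lambda>x a. (2/15)*x + (-1/30)*a) x a)^2*8 + 2*(\<lambda>x a. (2/15)*x + (-1/30)*a) x a*(\<lambda>x a. (1/30)*x + (-2/15)*a) x a*(-2) + ((\<lambda>x a. (1/30)*x + (-2/15)*a) x a)^2*8))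
               - (a*1 - 2*x)^2/(4*8) - a^2*(2/9)/4 - (1/4)*a^2*(2/9) \<ge> 0" .
qed simp_all


lemma body_5: "Body 5"
proof (rule generic[where L="Poly ([0, (15/8), 0, (-35/4), 0, (63/8)]::real list)" and k="Poly ([(15/16), (-15/4), (-105/8), (35/4), (315/16)]::real list)" and km="Poly ([(15/16), (15/4), (-105/8), (-35/4), (315/16)]::real list)"
   and c="(1/8)" and K="(25/2)" and Kx="(5/2)" and Km="(25/2)" and lp="1"
   and lm="(-1)" and h="(2/11)" and al="\<lambda>x a. (1/12)*x + (-1/60)*a" and be="\<lambda>x a. (-1/60)*x + (1/12)*a"])
  show "degree (Poly ([0, (15/8), 0, (-35/4), 0, (63/8)]::real list)) \<le> 5" by (rule deg_Poly) simp
  show "coeff (Poly ([0, (15/8), 0, (-35/4), 0, (63/8)]::real list)) 5 \<noteq> 0" unfolding coeff_Poly_eq by (simp add: nth_default_def)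
  show "\<And>v. degree v \<le> 5 - 1 \<Longrightarrow> ip v (Poly ([0, (15/8), 0, (-35/4), 0, (63/8)]::real list)) = 0"
    by (rule orth_Poly[where n=5]) (code_simp, simp_all)
  show "degree (Poly ([(15/16), (-15/4), (-105/8), (35/4), (315/16)]::real list)) \<le> 5 - 1" by (rule deg_Poly) simp
  show "degree (Poly ([(15/16), (15/4), (-105/8), (-35/4), (315/16)]::real list)) \<le> 5 - 1" by (rule deg_Poly) simp
  show "\<And>v. degree v \<le> 5 - 1 \<Longrightarrow> ip v (Poly ([(15/16), (-15/4), (-105/8), (35/4), (315/16)]::real list)) = poly v 1"
    by (rule rep1_Poly[where n=5]) (code_simp, simp_all)
  show "\<And>v. degree v \<le> 5 - 1 \<Longrightarrow> ip v (Poly ([(15/16), (15/4), (-105/8), (-35/4), (315/16)]::real list)) = poly v (-1)"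
    by (rule repm_Poly[where n=5]) (code_simp, simp_all)
  show "poly (Poly ([(15/16), (-15/4), (-105/8), (35/4), (315/16)]::real list)) 1 = (25/2)" by simp
  show "poly (Poly ([(15/16), (15/4), (-105/8), (-35/4), (315/16)]::real list)) 1 = (5/2)" by simp
  show "poly (Poly ([(15/16), (15/4), (-105/8), (-35/4), (315/16)]::real list)) (-1) = (25/2)" by simp
  show "poly (Poly ([0, (15/8), 0, (-35/4), 0, (63/8)]::real list)) 1 = 1" by simp
  show "poly (Poly ([0, (15/8), 0, (-35/4), 0, (63/8)]::real list)) (-1) = (-1)" by simp
  show "ip (Poly ([0, (15/8), 0, (-35/4), 0, (63/8)]::real list)) (Poly ([0, (15/8), 0, (-35/4), 0, (63/8)]::real list)) = (2/11)" by (subst ip_Poly) (simp, code_simp)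
  fix x a :: real
  have "(\<lambda>x a. (1/12)*x + (-1/60)*a) x a = (1/12)*x + (-1/60)*a" "(\<lambda>x a. (-1/60)*x + (1/12)*a) x a = (-1/60)*x + (1/12)*a" by simp_all
  have "(2-(1/8))*(2*(\<lambda>x a. (1/12)*x + (-1/60)*a) x a*x + 2*(\<lambda>x a. (-1/60)*x + (1/12)*a) x a*(-a*(-1)) - (((\<lambda>x a. (1/12)*x + (-1/60)*a) x a)^2*(25/2) + 2*(\<lambda>x a. (1/12)*x + (-1/60)*a) x a*(\<lambda>x a. (-1/60)*x + (1/12)*a) x a*(5/2) + ((\<lambda>x a. (-1/60)*x + (1/12)*a) x a)^2*(25/2)))
               - (a*1 - 2*x)^2/(4*(25/2)) - a^2*(2/11)/4 - (1/8)*a^2*(2/11)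
        = (61/800)*(x + (7/61)*a)^2 + (45/671)*a^2"
    by (simp add: power2_eq_square field_simps)
  also have "\<dots> \<ge> 0" by simp
  finally show "(2-(1/8))*(2*(\<lambda>x a. (1/12)*x + (-1/60)*a) x a*x + 2*(\<lambda>x a. (-1/60)*x + (1/12)*a) x a*(-a*(-1)) - (((\<lambda>x a. (1/12)*x + (-1/60)*a) x a)^2*(25/2) + 2*(\<lambda>x a. (1/12)*x + (-1/60)*a) x a*(\<lambda>x a. (-1/60)*x + (1/12)*a) x a*(5/2) + ((\<lambda>x a. (-1/60)*x + (1/12)*a) x a)^2*(25/2)))
               - (a*1 - 2*x)^2/(4*(25/2)) - a^2*(2/11)/4 - (1/8)*a^2*(2/11) \<ge> 0" .
qed simp_all


lemma body_6: "Body 6"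
proof (rule generic[where L="Poly ([(-5/16), 0, (105/16), 0, (-315/16), 0, (231/16)]::real list)" and k="Poly ([(15/16), (105/16), (-105/8), (-315/8), (315/16), (693/16)]::real list)" and km="Poly ([(15/16), (-105/16), (-105/8), (315/8), (315/16), (-693/16)]::real list)"
   and c="(1/8)" and K="18" and Kx="(-3)" and Km="18" and lp="1"
   and lm="1" and h="(2/13)" and al="\<lambda>x a. (2/35)*x + (-1/105)*a" and be="\<lambda>x a. (1/105)*x + (-2/35)*a"])
  show "degree (Poly ([(-5/16), 0, (105/16), 0, (-315/16), 0, (231/16)]::real list)) \<le> 6" by (rule deg_Poly) simp
  show "coeff (Poly ([(-5/16), 0, (105/16), 0, (-315/16), 0, (231/16)]::real list)) 6 \<noteq> 0" unfolding coeff_Poly_eq by (simp add: nth_default_def)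
  show "\<And>v. degree v \<le> 6 - 1 \<Longrightarrow> ip v (Poly ([(-5/16), 0, (105/16), 0, (-315/16), 0, (231/16)]::real list)) = 0"
    by (rule orth_Poly[where n=6]) (code_simp, simp_all)
  show "degree (Poly ([(15/16), (105/16), (-105/8), (-315/8), (315/16), (693/16)]::real list)) \<le> 6 - 1" by (rule deg_Poly) simp
  show "degree (Poly ([(15/16), (-105/16), (-105/8), (315/8), (315/16), (-693/16)]::real list)) \<le> 6 - 1" by (rule deg_Poly) simp
  show "\<And>v. degree v \<le> 6 - 1 \<Longrightarrow> ip v (Poly ([(15/16), (105/16), (-105/8), (-315/8), (315/16), (693/16)]::real list)) = poly v 1"
    by (rule rep1_Poly[where n=6]) (code_simp, simp_all)
  show "\<And>v. degree v \<le> 6 - 1 \<Longrightarrow> ip v (Poly ([(15/16), (-105/16), (-105/8), (315/8), (315/16), (-693/16)]::real list)) = poly v (-1)"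
    by (rule repm_Poly[where n=6]) (code_simp, simp_all)
  show "poly (Poly ([(15/16), (105/16), (-105/8), (-315/8), (315/16), (693/16)]::real list)) 1 = 18" by simp
  show "poly (Poly ([(15/16), (-105/16), (-105/8), (315/8), (315/16), (-693/16)]::real list)) 1 = (-3)" by simp
  show "poly (Poly ([(15/16), (-105/16), (-105/8), (315/8), (315/16), (-693/16)]::real list)) (-1) = 18" by simp
  show "poly (Poly ([(-5/16), 0, (105/16), 0, (-315/16), 0, (231/16)]::real list)) 1 = 1" by simp
  show "poly (Poly ([(-5/16), 0, (105/16), 0, (-315/16), 0, (231/16)]::real list)) (-1) = 1" by simp
  show "ip (Poly ([(-5/16), 0, (105/16), 0, (-315/16), 0, (231/16)]::real list)) (Poly ([(-5/16), 0, (105/16), 0, (-315/16), 0, (231/16)]::real list)) = (2/13)" by (subst ip_Poly) (simp, code_simp)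
  fix x a :: real
  have "(\<lambda>x a. (2/35)*x + (-1/105)*a) x a = (2/35)*x + (-1/105)*a" "(\<lambda>x a. (1/105)*x + (-2/35)*a) x a = (1/105)*x + (-2/35)*a" by simp_all
  have "(2-(1/8))*(2*(\<lambda>x a. (2/35)*x + (-1/105)*a) x a*x + 2*(\<lambda>x a. (1/105)*x + (-2/35)*a) x a*(-a*1) - (((\<lambda>x a. (2/35)*x + (-1/105)*a) x a)^2*18 + 2*(\<lambda>x a. (2/35)*x + (-1/105)*a) x a*(\<lambda>x a. (1/105)*x + (-2/35)*a) x a*(-3) + ((\<lambda>x a. (1/105)*x + (-2/35)*a) x a)^2*18))
               - (a*1 - 2*x)^2/(4*18) - a^2*(2/13)/4 - (1/8)*a^2*(2/13)
        = (13/252)*(x + (5/26)*a)^2 + (7/208)*a^2"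
    by (simp add: power2_eq_square field_simps)
  also have "\<dots> \<ge> 0" by simp
  finally show "(2-(1/8))*(2*(\<lambda>x a. (2/35)*x + (-1/105)*a) x a*x + 2*(\<lambda>x a. (1/105)*x + (-2/35)*a) x a*(-a*1) - (((\<lambda>x a. (2/35)*x + (-1/105)*a) x a)^2*18 + 2*(\<lambda>x a. (2/35)*x + (-1/105)*a) x a*(\<lambda>x a. (1/105)*x + (-2/35)*a) x a*(-3) + ((\<lambda>x a. (1/105)*x + (-2/35)*a) x a)^2*18))
               - (a*1 - 2*x)^2/(4*18) - a^2*(2/13)/4 - (1/8)*a^2*(2/13) \<ge> 0" .
qed simp_all


lemma body_7: "Body 7"
proof (rule generic[where L="Poly ([0, (-35/16), 0, (315/16), 0, (-693/16), 0, (429/16)]::real list)" and k="Poly ([(-35/32), (105/16), (945/32), (-315/8), (-3465/32), (693/16), (3003/32)]::real list)" and km="Poly ([(-35/32), (-105/16), (945/32), (315/8), (-3465/32), (-693/16), (3003/32)]::real list)"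
   and c="(1/16)" and K="(49/2)" and Kx="(7/2)" and Km="(49/2)" and lp="1"
   and lm="(-1)" and h="(2/15)" and al="\<lambda>x a. (1/24)*x + (-1/168)*a" and be="\<lambda>x a. (-1/168)*x + (1/24)*a"])
  show "degree (Poly ([0, (-35/16), 0, (315/16), 0, (-693/16), 0, (429/16)]::real list)) \<le> 7" by (rule deg_Poly) simp
  show "coeff (Poly ([0, (-35/16), 0, (315/16), 0, (-693/16), 0, (429/16)]::real list)) 7 \<noteq> 0" unfolding coeff_Poly_eq by (simp add: nth_default_def)
  show "\<And>v. degree v \<le> 7 - 1 \<Longrightarrow> ip v (Poly ([0, (-35/16), 0, (315/16), 0, (-693/16), 0, (429/16)]::real list)) = 0"
    by (rule orth_Poly[where n=7]) (code_simp, simp_all)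
  show "degree (Poly ([(-35/32), (105/16), (945/32), (-315/8), (-3465/32), (693/16), (3003/32)]::real list)) \<le> 7 - 1" by (rule deg_Poly) simp
  show "degree (Poly ([(-35/32), (-105/16), (945/32), (315/8), (-3465/32), (-693/16), (3003/32)]::real list)) \<le> 7 - 1" by (rule deg_Poly) simp
  show "\<And>v. degree v \<le> 7 - 1 \<Longrightarrow> ip v (Poly ([(-35/32), (105/16), (945/32), (-315/8), (-3465/32), (693/16), (3003/32)]::real list)) = poly v 1"
    by (rule rep1_Poly[where n=7]) (code_simp, simp_all)
  show "\<And>v. degree v \<le> 7 - 1 \<Longrightarrow> ip v (Poly ([(-35/32), (-105/16), (945/32), (315/8), (-3465/32), (-693/16), (3003/32)]::real list)) = poly v (-1)"
    by (rule repm_Poly[where n=7]) (code_simp, simp_all)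
  show "poly (Poly ([(-35/32), (105/16), (945/32), (-315/8), (-3465/32), (693/16), (3003/32)]::real list)) 1 = (49/2)" by simp
  show "poly (Poly ([(-35/32), (-105/16), (945/32), (315/8), (-3465/32), (-693/16), (3003/32)]::real list)) 1 = (7/2)" by simp
  show "poly (Poly ([(-35/32), (-105/16), (945/32), (315/8), (-3465/32), (-693/16), (3003/32)]::real list)) (-1) = (49/2)" by simp
  show "poly (Poly ([0, (-35/16), 0, (315/16), 0, (-693/16), 0, (429/16)]::real list)) 1 = 1" by simp
  show "poly (Poly ([0, (-35/16), 0, (315/16), 0, (-693/16), 0, (429/16)]::real list)) (-1) = (-1)" by simp
  show "ip (Poly ([0, (-35/16), 0, (315/16), 0, (-693/16), 0, (429/16)]::real list)) (Poly ([0, (-35/16), 0, (315/16), 0, (-693/16), 0, (429/16)]::real list)) = (2/15)" by (subst ip_Poly) (simp, code_simp)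
  fix x a :: real
  have "(\<lambda>x a. (1/24)*x + (-1/168)*a) x a = (1/24)*x + (-1/168)*a" "(\<lambda>x a. (-1/168)*x + (1/24)*a) x a = (-1/168)*x + (1/24)*a" by simp_all
  have "(2-(1/16))*(2*(\<lambda>x a. (1/24)*x + (-1/168)*a) x a*x + 2*(\<lambda>x a. (-1/168)*x + (1/24)*a) x a*(-a*(-1)) - (((\<lambda>x a. (1/24)*x + (-1/168)*a) x a)^2*(49/2) + 2*(\<lambda>x a. (1/24)*x + (-1/168)*a) x a*(\<lambda>x a. (-1/168)*x + (1/24)*a) x a*(7/2) + ((\<lambda>x a. (-1/168)*x + (1/24)*a) x a)^2*(49/2)))
               - (a*1 - 2*x)^2/(4*(49/2)) - a^2*(2/15)/4 - (1/16)*a^2*(2/15)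
        = (751/18816)*(x + (167/751)*a)^2 + (424/15771)*a^2"
    by (simp add: power2_eq_square field_simps)
  also have "\<dots> \<ge> 0" by simp
  finally show "(2-(1/16))*(2*(\<lambda>x a. (1/24)*x + (-1/168)*a) x a*x + 2*(\<lambda>x a. (-1/168)*x + (1/24)*a) x a*(-a*(-1)) - (((\<lambda>x a. (1/24)*x + (-1/168)*a) x a)^2*(49/2) + 2*(\<lambda>x a. (1/24)*x + (-1/168)*a) x a*(\<lambda>x a. (-1/168)*x + (1/24)*a) x a*(7/2) + ((\<lambda>x a. (-1/168)*x + (1/24)*a) x a)^2*(49/2)))
               - (a*1 - 2*x)^2/(4*(49/2)) - a^2*(2/15)/4 - (1/16)*a^2*(2/15) \<ge> 0" .
qed simp_all


lemma body_8: "Body 8"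
proof (rule generic[where L="Poly ([(35/128), 0, (-315/32), 0, (3465/64), 0, (-3003/32), 0, (6435/128)]::real list)" and k="Poly ([(-35/32), (-315/32), (945/32), (3465/32), (-3465/32), (-9009/32), (3003/32), (6435/32)]::real list)" and km="Poly ([(-35/32), (315/32), (945/32), (-3465/32), (-3465/32), (9009/32), (3003/32), (-6435/32)]::real list)"
   and c="(1/16)" and K="32" and Kx="(-4)" and Km="32" and lp="1"
   and lm="1" and h="(2/17)" and al="\<lambda>x a. (2/63)*x + (-1/252)*a" and be="\<lambda>x a. (1/252)*x + (-2/63)*a"])
  show "degree (Poly ([(35/128), 0, (-315/32), 0, (3465/64), 0, (-3003/32), 0, (6435/128)]::real list)) \<le> 8" by (rule deg_Poly) simp
  show "coeff (Poly ([(35/128), 0, (-315/32), 0, (3465/64), 0, (-3003/32), 0, (6435/128)]::real list)) 8 \<noteq> 0" unfolding coeff_Poly_eq by (simp add: nth_default_def)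
  show "\<And>v. degree v \<le> 8 - 1 \<Longrightarrow> ip v (Poly ([(35/128), 0, (-315/32), 0, (3465/64), 0, (-3003/32), 0, (6435/128)]::real list)) = 0"
    by (rule orth_Poly[where n=8]) (code_simp, simp_all)
  show "degree (Poly ([(-35/32), (-315/32), (945/32), (3465/32), (-3465/32), (-9009/32), (3003/32), (6435/32)]::real list)) \<le> 8 - 1" by (rule deg_Poly) simp
  show "degree (Poly ([(-35/32), (315/32), (945/32), (-3465/32), (-3465/32), (9009/32), (3003/32), (-6435/32)]::real list)) \<le> 8 - 1" by (rule deg_Poly) simp
  show "\<And>v. degree v \<le> 8 - 1 \<Longrightarrow> ip v (Poly ([(-35/32), (-315/32), (945/32), (3465/32), (-3465/32), (-9009/32), (3003/32), (6435/32)]::real list)) = poly v 1"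
    by (rule rep1_Poly[where n=8]) (code_simp, simp_all)
  show "\<And>v. degree v \<le> 8 - 1 \<Longrightarrow> ip v (Poly ([(-35/32), (315/32), (945/32), (-3465/32), (-3465/32), (9009/32), (3003/32), (-6435/32)]::real list)) = poly v (-1)"
    by (rule repm_Poly[where n=8]) (code_simp, simp_all)
  show "poly (Poly ([(-35/32), (-315/32), (945/32), (3465/32), (-3465/32), (-9009/32), (3003/32), (6435/32)]::real list)) 1 = 32" by simp
  show "poly (Poly ([(-35/32), (315/32), (945/32), (-3465/32), (-3465/32), (9009/32), (3003/32), (-6435/32)]::real list)) 1 = (-4)" by simp
  show "poly (Poly ([(-35/32), (315/32), (945/32), (-3465/32), (-3465/32), (9009/32), (3003/32), (-6435/32)]::real list)) (-1) = 32" by simp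
  show "poly (Poly ([(35/128), 0, (-315/32), 0, (3465/64), 0, (-3003/32), 0, (6435/128)]::real list)) 1 = 1" by simp
  show "poly (Poly ([(35/128), 0, (-315/32), 0, (3465/64), 0, (-3003/32), 0, (6435/128)]::real list)) (-1) = 1" by simp
  show "ip (Poly ([(35/128), 0, (-315/32), 0, (3465/64), 0, (-3003/32), 0, (6435/128)]::real list)) (Poly ([(35/128), 0, (-315/32), 0, (3465/64), 0, (-3003/32), 0, (6435/128)]::real list)) = (2/17)" by (subst ip_Poly) (simp, code_simp)
  fix x a :: real
  have "(\<lambda>x a. (2/63)*x + (-1/252)*a) x a = (2/63)*x + (-1/252)*a" "(\<lambda>x a. (1/252)*x + (-2/63)*a) x a = (1/252)*x + (-2/63)*a" by simp_all
  have "(2-(1/16))*(2*(\<lambda>x a. (2/63)*x + (-1/252)*a) x a*x + 2*(\<lambda>x a. (1/252)*x + (-2/63)*a) x a*(-a*1) - (((\<lambda>x a. (2/63)*x + (-1/252)*a) x a)^2*32 + 2*(\<lambda>x a. (2/63)*x + (-1/252)*a) x a*(\<lambda>x a. (1/252)*x + (-2/63)*a) x a*(-4) + ((\<lambda>x a. (1/252)*x + (-2/63)*a) x a)^2*32))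
               - (a*1 - 2*x)^2/(4*32) - a^2*(2/17)/4 - (1/16)*a^2*(2/17)
        = (61/2016)*(x + (16/61)*a)^2 + (1971/132736)*a^2"
    by (simp add: power2_eq_square field_simps)
  also have "\<dots> \<ge> 0" by simp
  finally show "(2-(1/16))*(2*(\<lambda>x a. (2/63)*x + (-1/252)*a) x a*x + 2*(\<lambda>x a. (1/252)*x + (-2/63)*a) x a*(-a*1) - (((\<lambda>x a. (2/63)*x + (-1/252)*a) x a)^2*32 + 2*(\<lambda>x a. (2/63)*x + (-1/252)*a) x a*(\<lambda>x a. (1/252)*x + (-2/63)*a) x a*(-4) + ((\<lambda>x a. (1/252)*x + (-2/63)*a) x a)^2*32))
               - (a*1 - 2*x)^2/(4*32) - a^2*(2/17)/4 - (1/16)*a^2*(2/17) \<ge> 0" .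
qed simp_all


lemma body_9: "Body 9"
proof (rule generic[where L="Poly ([0, (315/128), 0, (-1155/32), 0, (9009/64), 0, (-6435/32), 0, (12155/128)]::real list)" and k="Poly ([(315/256), (-315/32), (-3465/64), (3465/32), (45045/128), (-9009/32), (-45045/64), (6435/32), (109395/256)]::real list)" and km="Poly ([(315/256), (315/32), (-3465/64), (-3465/32), (45045/128), (9009/32), (-45045/64), (-6435/32), (109395/256)]::real list)"
   and c="(1/32)" and K="(81/2)" and Kx="(9/2)" and Km="(81/2)" and lp="1"
   and lm="(-1)" and h="(2/19)" and al="\<lambda>x a. (1/40)*x + (-1/360)*a" and be="\<lambda>x a. (-1/360)*x + (1/40)*a"])
  show "degree (Poly ([0, (315/128), 0, (-1155/32), 0, (9009/64), 0, (-6435/32), 0, (12155/128)]::real list)) \<le> 9" by (rule deg_Poly) simp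
  show "coeff (Poly ([0, (315/128), 0, (-1155/32), 0, (9009/64), 0, (-6435/32), 0, (12155/128)]::real list)) 9 \<noteq> 0" unfolding coeff_Poly_eq by (simp add: nth_default_def)
  show "\<And>v. degree v \<le> 9 - 1 \<Longrightarrow> ip v (Poly ([0, (315/128), 0, (-1155/32), 0, (9009/64), 0, (-6435/32), 0, (12155/128)]::real list)) = 0"
    by (rule orth_Poly[where n=9]) (code_simp, simp_all)
  show "degree (Poly ([(315/256), (-315/32), (-3465/64), (3465/32), (45045/128), (-9009/32), (-45045/64), (6435/32), (109395/256)]::real list)) \<le> 9 - 1" by (rule deg_Poly) simp
  show "degree (Poly ([(315/256), (315/32), (-3465/64), (-3465/32), (45045/128), (9009/32), (-45045/64), (-6435/32), (109395/256)]::real list)) \<le> 9 - 1" by (rule deg_Poly) simp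
  show "\<And>v. degree v \<le> 9 - 1 \<Longrightarrow> ip v (Poly ([(315/256), (-315/32), (-3465/64), (3465/32), (45045/128), (-9009/32), (-45045/64), (6435/32), (109395/256)]::real list)) = poly v 1"
    by (rule rep1_Poly[where n=9]) (code_simp, simp_all)
  show "\<And>v. degree v \<le> 9 - 1 \<Longrightarrow> ip v (Poly ([(315/256), (315/32), (-3465/64), (-3465/32), (45045/128), (9009/32), (-45045/64), (-6435/32), (109395/256)]::real list)) = poly v (-1)"
    by (rule repm_Poly[where n=9]) (code_simp, simp_all)
  show "poly (Poly ([(315/256), (-315/32), (-3465/64), (3465/32), (45045/128), (-9009/32), (-45045/64), (6435/32), (109395/256)]::real list)) 1 = (81/2)" by simp
  show "poly (Poly ([(315/256), (315/32), (-3465/64), (-3465/32), (45045/128), (9009/32), (-45045/64), (-6435/32), (109395/256)]::real list)) 1 = (9/2)" by simp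
  show "poly (Poly ([(315/256), (315/32), (-3465/64), (-3465/32), (45045/128), (9009/32), (-45045/64), (-6435/32), (109395/256)]::real list)) (-1) = (81/2)" by simp
  show "poly (Poly ([0, (315/128), 0, (-1155/32), 0, (9009/64), 0, (-6435/32), 0, (12155/128)]::real list)) 1 = 1" by simp
  show "poly (Poly ([0, (315/128), 0, (-1155/32), 0, (9009/64), 0, (-6435/32), 0, (12155/128)]::real list)) (-1) = (-1)" by simp
  show "ip (Poly ([0, (315/128), 0, (-1155/32), 0, (9009/64), 0, (-6435/32), 0, (12155/128)]::real list)) (Poly ([0, (315/128), 0, (-1155/32), 0, (9009/64), 0, (-6435/32), 0, (12155/128)]::real list)) = (2/19)" by (subst ip_Poly) (simp, code_simp)
  fix x a :: real
  have "(\<lambda>x a. (1/40)*x + (-1/360)*a) x a = (1/40)*x + (-1/360)*a" "(\<lambda>x a. (-1/360)*x + (1/40)*a) x a = (-1/360)*x + (1/40)*a" by simp_all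
  have "(2-(1/32))*(2*(\<lambda>x a. (1/40)*x + (-1/360)*a) x a*x + 2*(\<lambda>x a. (-1/360)*x + (1/40)*a) x a*(-a*(-1)) - (((\<lambda>x a. (1/40)*x + (-1/360)*a) x a)^2*(81/2) + 2*(\<lambda>x a. (1/40)*x + (-1/360)*a) x a*(\<lambda>x a. (-1/360)*x + (1/40)*a) x a*(9/2) + ((\<lambda>x a. (-1/360)*x + (1/40)*a) x a)^2*(81/2)))
               - (a*1 - 2*x)^2/(4*(81/2)) - a^2*(2/19)/4 - (1/32)*a^2*(2/19)
        = (2543/103680)*(x + (713/2543)*a)^2 + (2225/193268)*a^2"
    by (simp add: power2_eq_square field_simps)
  also have "\<dots> \<ge> 0" by simp
  finally show "(2-(1/32))*(2*(\<lambda>x a. (1/40)*x + (-1/360)*a) x a*x + 2*(\<lambda>x a. (-1/360)*x + (1/40)*a) x a*(-a*(-1)) - (((\<lambda>x a. (1/40)*x + (-1/360)*a) x a)^2*(81/2) + 2*(\<lambda>x a. (1/40)*x + (-1/360)*a) x a*(\<lambda>x a. (-1/360)*x + (1/40)*a) x a*(9/2) + ((\<lambda>x a. (-1/360)*x + (1/40)*a) x a)^2*(81/2)))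
               - (a*1 - 2*x)^2/(4*(81/2)) - a^2*(2/19)/4 - (1/32)*a^2*(2/19) \<ge> 0" .
qed simp_all


lemma body_10: "Body 10"
proof (rule generic[where L="Poly ([(-63/256), 0, (3465/256), 0, (-15015/128), 0, (45045/128), 0, (-109395/256), 0, (46189/256)]::real list)" and k="Poly ([(315/256), (3465/256), (-3465/64), (-15015/64), (45045/128), (135135/128), (-45045/64), (-109395/64), (109395/256), (230945/256)]::real list)" and km="Poly ([(315/256), (-3465/256), (-3465/64), (15015/64), (45045/128), (-135135/128), (-45045/64), (109395/64), (109395/256), (-230945/256)]::real list)"
   and c="(1/32)" and K="50" and Kx="(-5)" and Km="50" and lp="1"
   and lm="1" and h="(2/21)" and al="\<lambda>x a. (2/99)*x + (-1/495)*a" and be="\<lambda>x a. (1/495)*x + (-2/99)*a"])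
  show "degree (Poly ([(-63/256), 0, (3465/256), 0, (-15015/128), 0, (45045/128), 0, (-109395/256), 0, (46189/256)]::real list)) \<le> 10" by (rule deg_Poly) simp
  show "coeff (Poly ([(-63/256), 0, (3465/256), 0, (-15015/128), 0, (45045/128), 0, (-109395/256), 0, (46189/256)]::real list)) 10 \<noteq> 0" unfolding coeff_Poly_eq by (simp add: nth_default_def)
  show "\<And>v. degree v \<le> 10 - 1 \<Longrightarrow> ip v (Poly ([(-63/256), 0, (3465/256), 0, (-15015/128), 0, (45045/128), 0, (-109395/256), 0, (46189/256)]::real list)) = 0"
    by (rule orth_Poly[where n=10]) (code_simp, simp_all)
  show "degree (Poly ([(315/256), (3465/256), (-3465/64), (-15015/64), (45045/128), (135135/128), (-45045/64), (-109395/64), (109395/256), (230945/256)]::real list)) \<le> 10 - 1" by (rule deg_Poly) simp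
  show "degree (Poly ([(315/256), (-3465/256), (-3465/64), (15015/64), (45045/128), (-135135/128), (-45045/64), (109395/64), (109395/256), (-230945/256)]::real list)) \<le> 10 - 1" by (rule deg_Poly) simp
  show "\<And>v. degree v \<le> 10 - 1 \<Longrightarrow> ip v (Poly ([(315/256), (3465/256), (-3465/64), (-15015/64), (45045/128), (135135/128), (-45045/64), (-109395/64), (109395/256), (230945/256)]::real list)) = poly v 1"
    by (rule rep1_Poly[where n=10]) (code_simp, simp_all)
  show "\<And>v. degree v \<le> 10 - 1 \<Longrightarrow> ip v (Poly ([(315/256), (-3465/256), (-3465/64), (15015/64), (45045/128), (-135135/128), (-45045/64), (109395/64), (109395/256), (-230945/256)]::real list)) = poly v (-1)"
    by (rule repm_Poly[where n=10]) (code_simp, simp_all)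
  show "poly (Poly ([(315/256), (3465/256), (-3465/64), (-15015/64), (45045/128), (135135/128), (-45045/64), (-109395/64), (109395/256), (230945/256)]::real list)) 1 = 50" by simp
  show "poly (Poly ([(315/256), (-3465/256), (-3465/64), (15015/64), (45045/128), (-135135/128), (-45045/64), (109395/64), (109395/256), (-230945/256)]::real list)) 1 = (-5)" by simp
  show "poly (Poly ([(315/256), (-3465/256), (-3465/64), (15015/64), (45045/128), (-135135/128), (-45045/64), (109395/64), (109395/256), (-230945/256)]::real list)) (-1) = 50" by simp
  show "poly (Poly ([(-63/256), 0, (3465/256), 0, (-15015/128), 0, (45045/128), 0, (-109395/256), 0, (46189/256)]::real list)) 1 = 1" by simp
  show "poly (Poly ([(-63/256), 0, (3465/256), 0, (-15015/128), 0, (45045/128), 0, (-109395/256), 0, (46189/256)]::real list)) (-1) = 1" by simp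
  show "ip (Poly ([(-63/256), 0, (3465/256), 0, (-15015/128), 0, (45045/128), 0, (-109395/256), 0, (46189/256)]::real list)) (Poly ([(-63/256), 0, (3465/256), 0, (-15015/128), 0, (45045/128), 0, (-109395/256), 0, (46189/256)]::real list)) = (2/21)" by (subst ip_Poly) (simp, code_simp)
  fix x a :: real
  have "(\<lambda>x a. (2/99)*x + (-1/495)*a) x a = (2/99)*x + (-1/495)*a" "(\<lambda>x a. (1/495)*x + (-2/99)*a) x a = (1/495)*x + (-2/99)*a" by simp_all
  have "(2-(1/32))*(2*(\<lambda>x a. (2/99)*x + (-1/495)*a) x a*x + 2*(\<lambda>x a. (1/495)*x + (-2/99)*a) x a*(-a*1) - (((\<lambda>x a. (2/99)*x + (-1/495)*a) x a)^2*50 + 2*(\<lambda>x a. (2/99)*x + (-1/495)*a) x a*(\<lambda>x a. (1/495)*x + (-2/99)*a) x a*(-5) + ((\<lambda>x a. (1/495)*x + (-2/99)*a) x a)^2*50))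
               - (a*1 - 2*x)^2/(4*50) - a^2*(2/21)/4 - (1/32)*a^2*(2/21)
        = (87/4400)*(x + (53/174)*a)^2 + (1199/194880)*a^2"
    by (simp add: power2_eq_square field_simps)
  also have "\<dots> \<ge> 0" by simp
  finally show "(2-(1/32))*(2*(\<lambda>x a. (2/99)*x + (-1/495)*a) x a*x + 2*(\<lambda>x a. (1/495)*x + (-2/99)*a) x a*(-a*1) - (((\<lambda>x a. (2/99)*x + (-1/495)*a) x a)^2*50 + 2*(\<lambda>x a. (2/99)*x + (-1/495)*a) x a*(\<lambda>x a. (1/495)*x + (-2/99)*a) x a*(-5) + ((\<lambda>x a. (1/495)*x + (-2/99)*a) x a)^2*50))
               - (a*1 - 2*x)^2/(4*50) - a^2*(2/21)/4 - (1/32)*a^2*(2/21) \<ge> 0" .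
qed simp_all


lemma body_11: "Body 11"
proof (rule generic[where L="Poly ([0, (-693/256), 0, (15015/256), 0, (-45045/128), 0, (109395/128), 0, (-230945/256), 0, (88179/256)]::real list)" and k="Poly ([(-693/512), (3465/256), (45045/512), (-15015/64), (-225225/256), (135135/128), (765765/256), (-109395/64), (-2078505/512), (230945/256), (969969/512)]::real list)" and km="Poly ([(-693/512), (-3465/256), (45045/512), (15015/64), (-225225/256), (-135135/128), (765765/256), (109395/64), (-2078505/512), (-230945/256), (969969/512)]::real list)"
   and c="(1/64)" and K="(121/2)" and Kx="(11/2)" and Km="(121/2)" and lp="1"
   and lm="(-1)" and h="(2/23)" and al="\<lambda>x a. (1/60)*x + (-1/660)*a" and be="\<lambda>x a. (-1/660)*x + (1/60)*a"])
  show "degree (Poly ([0, (-693/256), 0, (15015/256), 0, (-45045/128), 0, (109395/128), 0, (-230945/256), 0, (88179/256)]::real list)) \<le> 11" by (rule deg_Poly) simp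
  show "coeff (Poly ([0, (-693/256), 0, (15015/256), 0, (-45045/128), 0, (109395/128), 0, (-230945/256), 0, (88179/256)]::real list)) 11 \<noteq> 0" unfolding coeff_Poly_eq by (simp add: nth_default_def)
  show "\<And>v. degree v \<le> 11 - 1 \<Longrightarrow> ip v (Poly ([0, (-693/256), 0, (15015/256), 0, (-45045/128), 0, (109395/128), 0, (-230945/256), 0, (88179/256)]::real list)) = 0"
    by (rule orth_Poly[where n=11]) (code_simp, simp_all)
  show "degree (Poly ([(-693/512), (3465/256), (45045/512), (-15015/64), (-225225/256), (135135/128), (765765/256), (-109395/64), (-2078505/512), (230945/256), (969969/512)]::real list)) \<le> 11 - 1" by (rule deg_Poly) simp
  show "degree (Poly ([(-693/512), (-3465/256), (45045/512), (15015/64), (-225225/256), (-135135/128), (765765/256), (109395/64), (-2078505/512), (-230945/256), (969969/512)]::real list)) \<le> 11 - 1" by (rule deg_Poly) simp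
  show "\<And>v. degree v \<le> 11 - 1 \<Longrightarrow> ip v (Poly ([(-693/512), (3465/256), (45045/512), (-15015/64), (-225225/256), (135135/128), (765765/256), (-109395/64), (-2078505/512), (230945/256), (969969/512)]::real list)) = poly v 1"
    by (rule rep1_Poly[where n=11]) (code_simp, simp_all)
  show "\<And>v. degree v \<le> 11 - 1 \<Longrightarrow> ip v (Poly ([(-693/512), (-3465/256), (45045/512), (15015/64), (-225225/256), (-135135/128), (765765/256), (109395/64), (-2078505/512), (-230945/256), (969969/512)]::real list)) = poly v (-1)"
    by (rule repm_Poly[where n=11]) (code_simp, simp_all)
  show "poly (Poly ([(-693/512), (3465/256), (45045/512), (-15015/64), (-225225/256), (135135/128), (765765/256), (-109395/64), (-2078505/512), (230945/256), (969969/512)]::real list)) 1 = (121/2)" by simp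
  show "poly (Poly ([(-693/512), (-3465/256), (45045/512), (15015/64), (-225225/256), (-135135/128), (765765/256), (109395/64), (-2078505/512), (-230945/256), (969969/512)]::real list)) 1 = (11/2)" by simp
  show "poly (Poly ([(-693/512), (-3465/256), (45045/512), (15015/64), (-225225/256), (-135135/128), (765765/256), (109395/64), (-2078505/512), (-230945/256), (969969/512)]::real list)) (-1) = (121/2)" by simp
  show "poly (Poly ([0, (-693/256), 0, (15015/256), 0, (-45045/128), 0, (109395/128), 0, (-230945/256), 0, (88179/256)]::real list)) 1 = 1" by simp
  show "poly (Poly ([0, (-693/256), 0, (15015/256), 0, (-45045/128), 0, (109395/128), 0, (-230945/256), 0, (88179/256)]::real list)) (-1) = (-1)" by simp
  show "ip (Poly ([0, (-693/256), 0, (15015/256), 0, (-45045/128), 0, (109395/128), 0, (-230945/256), 0, (88179/256)]::real list)) (Poly ([0, (-693/256), 0, (15015/256), 0, (-45045/128), 0, (109395/128), 0, (-230945/256), 0, (88179/256)]::real list)) = (2/23)" by (subst ip_Poly) (simp, code_simp)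
  fix x a :: real
  have "(\<lambda>x a. (1/60)*x + (-1/660)*a) x a = (1/60)*x + (-1/660)*a" "(\<lambda>x a. (-1/660)*x + (1/60)*a) x a = (-1/660)*x + (1/60)*a" by simp_all
  have "(2-(1/64))*(2*(\<lambda>x a. (1/60)*x + (-1/660)*a) x a*x + 2*(\<lambda>x a. (-1/660)*x + (1/60)*a) x a*(-a*(-1)) - (((\<lambda>x a. (1/60)*x + (-1/660)*a) x a)^2*(121/2) + 2*(\<lambda>x a. (1/60)*x + (-1/660)*a) x a*(\<lambda>x a. (-1/660)*x + (1/60)*a) x a*(11/2) + ((\<lambda>x a. (-1/660)*x + (1/60)*a) x a)^2*(121/2)))
               - (a*1 - 2*x)^2/(4*(121/2)) - a^2*(2/23)/4 - (1/64)*a^2*(2/23)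
        = (7687/464640)*(x + (2443/7687)*a)^2 + (16227/3889622)*a^2"
    by (simp add: power2_eq_square field_simps)
  also have "\<dots> \<ge> 0" by simp
  finally show "(2-(1/64))*(2*(\<lambda>x a. (1/60)*x + (-1/660)*a) x a*x + 2*(\<lambda>x a. (-1/660)*x + (1/60)*a) x a*(-a*(-1)) - (((\<lambda>x a. (1/60)*x + (-1/660)*a) x a)^2*(121/2) + 2*(\<lambda>x a. (1/60)*x + (-1/660)*a) x a*(\<lambda>x a. (-1/660)*x + (1/60)*a) x a*(11/2) + ((\<lambda>x a. (-1/660)*x + (1/60)*a) x a)^2*(121/2)))
               - (a*1 - 2*x)^2/(4*(121/2)) - a^2*(2/23)/4 - (1/64)*a^2*(2/23) \<ge> 0" .
qed simp_all


lemma body_12: "Body 12"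
proof (rule generic[where L="Poly ([(231/1024), 0, (-9009/512), 0, (225225/1024), 0, (-255255/256), 0, (2078505/1024), 0, (-969969/512), 0, (676039/1024)]::real list)" and k="Poly ([(-693/512), (-9009/512), (45045/512), (225225/512), (-225225/256), (-765765/256), (765765/256), (2078505/256), (-2078505/512), (-4849845/512), (969969/512), (2028117/512)]::real list)" and km="Poly ([(-693/512), (9009/512), (45045/512), (-225225/512), (-225225/256), (765765/256), (765765/256), (-2078505/256), (-2078505/512), (4849845/512), (969969/512), (-2028117/512)]::real list)"
   and c="(1/128)" and K="72" and Kx="(-6)" and Km="72" and lp="1"
   and lm="1" and h="(2/25)" and al="\<lambda>x a. (2/143)*x + (-1/858)*a" and be="\<lambda>x a. (1/858)*x + (-2/143)*a"])
  show "degree (Poly ([(231/1024), 0, (-9009/512), 0, (225225/1024), 0, (-255255/256), 0, (2078505/1024), 0, (-969969/512), 0, (676039/1024)]::real list)) \<le> 12" by (rule deg_Poly) simp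
  show "coeff (Poly ([(231/1024), 0, (-9009/512), 0, (225225/1024), 0, (-255255/256), 0, (2078505/1024), 0, (-969969/512), 0, (676039/1024)]::real list)) 12 \<noteq> 0" unfolding coeff_Poly_eq by (simp add: nth_default_def)
  show "\<And>v. degree v \<le> 12 - 1 \<Longrightarrow> ip v (Poly ([(231/1024), 0, (-9009/512), 0, (225225/1024), 0, (-255255/256), 0, (2078505/1024), 0, (-969969/512), 0, (676039/1024)]::real list)) = 0"
    by (rule orth_Poly[where n=12]) (code_simp, simp_all)
  show "degree (Poly ([(-693/512), (-9009/512), (45045/512), (225225/512), (-225225/256), (-765765/256), (765765/256), (2078505/256), (-2078505/512), (-4849845/512), (969969/512), (2028117/512)]::real list)) \<le> 12 - 1" by (rule deg_Poly) simp
  show "degree (Poly ([(-693/512), (9009/512), (45045/512), (-225225/512), (-225225/256), (765765/256), (765765/256), (-2078505/256), (-2078505/512), (4849845/512), (969969/512), (-2028117/512)]::real list)) \<le> 12 - 1" by (rule deg_Poly) simp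
  show "\<And>v. degree v \<le> 12 - 1 \<Longrightarrow> ip v (Poly ([(-693/512), (-9009/512), (45045/512), (225225/512), (-225225/256), (-765765/256), (765765/256), (2078505/256), (-2078505/512), (-4849845/512), (969969/512), (2028117/512)]::real list)) = poly v 1"
    by (rule rep1_Poly[where n=12]) (code_simp, simp_all)
  show "\<And>v. degree v \<le> 12 - 1 \<Longrightarrow> ip v (Poly ([(-693/512), (9009/512), (45045/512), (-225225/512), (-225225/256), (765765/256), (765765/256), (-2078505/256), (-2078505/512), (4849845/512), (969969/512), (-2028117/512)]::real list)) = poly v (-1)"
    by (rule repm_Poly[where n=12]) (code_simp, simp_all)
  show "poly (Poly ([(-693/512), (-9009/512), (45045/512), (225225/512), (-225225/256), (-765765/256), (765765/256), (2078505/256), (-2078505/512), (-4849845/512), (969969/512), (2028117/512)]::real list)) 1 = 72" by simp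
  show "poly (Poly ([(-693/512), (9009/512), (45045/512), (-225225/512), (-225225/256), (765765/256), (765765/256), (-2078505/256), (-2078505/512), (4849845/512), (969969/512), (-2028117/512)]::real list)) 1 = (-6)" by simp
  show "poly (Poly ([(-693/512), (9009/512), (45045/512), (-225225/512), (-225225/256), (765765/256), (765765/256), (-2078505/256), (-2078505/512), (4849845/512), (969969/512), (-2028117/512)]::real list)) (-1) = 72" by simp
  show "poly (Poly ([(231/1024), 0, (-9009/512), 0, (225225/1024), 0, (-255255/256), 0, (2078505/1024), 0, (-969969/512), 0, (676039/1024)]::real list)) 1 = 1" by simp
  show "poly (Poly ([(231/1024), 0, (-9009/512), 0, (225225/1024), 0, (-255255/256), 0, (2078505/1024), 0, (-969969/512), 0, (676039/1024)]::real list)) (-1) = 1" by simp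
  show "ip (Poly ([(231/1024), 0, (-9009/512), 0, (225225/1024), 0, (-255255/256), 0, (2078505/1024), 0, (-969969/512), 0, (676039/1024)]::real list)) (Poly ([(231/1024), 0, (-9009/512), 0, (225225/1024), 0, (-255255/256), 0, (2078505/1024), 0, (-969969/512), 0, (676039/1024)]::real list)) = (2/25)" by (subst ip_Poly) (simp, code_simp)
  fix x a :: real
  have "(\<lambda>x a. (2/143)*x + (-1/858)*a) x a = (2/143)*x + (-1/858)*a" "(\<lambda>x a. (1/858)*x + (-2/143)*a) x a = (1/858)*x + (-2/143)*a" by simp_all
  have "(2-(1/128))*(2*(\<lambda>x a. (2/143)*x + (-1/858)*a) x a*x + 2*(\<lambda>x a. (1/858)*x + (-2/143)*a) x a*(-a*1) - (((\<lambda>x a. (2/143)*x + (-1/858)*a) x a)^2*72 + 2*(\<lambda>x a. (2/143)*x + (-1/858)*a) x a*(\<lambda>x a. (1/858)*x + (-2/143)*a) x a*(-6) + ((\<lambda>x a. (1/858)*x + (-2/143)*a) x a)^2*72))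
               - (a*1 - 2*x)^2/(4*72) - a^2*(2/25)/4 - (1/128)*a^2*(2/25)
        = (1151/82368)*(x + (1523/4604)*a)^2 + (65897/29465600)*a^2"
    by (simp add: power2_eq_square field_simps)
  also have "\<dots> \<ge> 0" by simp
  finally show "(2-(1/128))*(2*(\<lambda>x a. (2/143)*x + (-1/858)*a) x a*x + 2*(\<lambda>x a. (1/858)*x + (-2/143)*a) x a*(-a*1) - (((\<lambda>x a. (2/143)*x + (-1/858)*a) x a)^2*72 + 2*(\<lambda>x a. (2/143)*x + (-1/858)*a) x a*(\<lambda>x a. (1/858)*x + (-2/143)*a) x a*(-6) + ((\<lambda>x a. (1/858)*x + (-2/143)*a) x a)^2*72))
               - (a*1 - 2*x)^2/(4*72) - a^2*(2/25)/4 - (1/128)*a^2*(2/25) \<ge> 0" .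
qed simp_all


lemma body_13: "Body 13"
proof (rule generic[where L="Poly ([0, (3003/1024), 0, (-45045/512), 0, (765765/1024), 0, (-692835/256), 0, (4849845/1024), 0, (-2028117/512), 0, (1300075/1024)]::real list)" and k="Poly ([(3003/2048), (-9009/512), (-135135/1024), (225225/512), (3828825/2048), (-765765/256), (-4849845/512), (2078505/256), (43648605/2048), (-4849845/512), (-22309287/1024), (2028117/512), (16900975/2048)]::real list)" and km="Poly ([(3003/2048), (9009/512), (-135135/1024), (-225225/512), (3828825/2048), (765765/256), (-4849845/512), (-2078505/256), (43648605/2048), (4849845/512), (-22309287/1024), (-2028117/512), (16900975/2048)]::real list)"
   and c="(1/256)" and K="(169/2)" and Kx="(13/2)" and Km="(169/2)" and lp="1"
   and lm="(-1)" and h="(2/27)" and al="\<lambda>x a. (1/84)*x + (-1/1092)*a" and be="\<lambda>x a. (-1/1092)*x + (1/84)*a"])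
  show "degree (Poly ([0, (3003/1024), 0, (-45045/512), 0, (765765/1024), 0, (-692835/256), 0, (4849845/1024), 0, (-2028117/512), 0, (1300075/1024)]::real list)) \<le> 13" by (rule deg_Poly) simp
  show "coeff (Poly ([0, (3003/1024), 0, (-45045/512), 0, (765765/1024), 0, (-692835/256), 0, (4849845/1024), 0, (-2028117/512), 0, (1300075/1024)]::real list)) 13 \<noteq> 0" unfolding coeff_Poly_eq by (simp add: nth_default_def)
  show "\<And>v. degree v \<le> 13 - 1 \<Longrightarrow> ip v (Poly ([0, (3003/1024), 0, (-45045/512), 0, (765765/1024), 0, (-692835/256), 0, (4849845/1024), 0, (-2028117/512), 0, (1300075/1024)]::real list)) = 0"
    by (rule orth_Poly[where n=13]) (code_simp, simp_all)
  show "degree (Poly ([(3003/2048), (-9009/512), (-135135/1024), (225225/512), (3828825/2048), (-765765/256), (-4849845/512), (2078505/256), (43648605/2048), (-4849845/512), (-22309287/1024), (2028117/512), (16900975/2048)]::real list)) \<le> 13 - 1" by (rule deg_Poly) simp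
  show "degree (Poly ([(3003/2048), (9009/512), (-135135/1024), (-225225/512), (3828825/2048), (765765/256), (-4849845/512), (-2078505/256), (43648605/2048), (4849845/512), (-22309287/1024), (-2028117/512), (16900975/2048)]::real list)) \<le> 13 - 1" by (rule deg_Poly) simp
  show "\<And>v. degree v \<le> 13 - 1 \<Longrightarrow> ip v (Poly ([(3003/2048), (-9009/512), (-135135/1024), (225225/512), (3828825/2048), (-765765/256), (-4849845/512), (2078505/256), (43648605/2048), (-4849845/512), (-22309287/1024), (2028117/512), (16900975/2048)]::real list)) = poly v 1"
    by (rule rep1_Poly[where n=13]) (code_simp, simp_all)
  show "\<And>v. degree v \<le> 13 - 1 \<Longrightarrow> ip v (Poly ([(3003/2048), (9009/512), (-135135/1024), (-225225/512), (3828825/2048), (765765/256), (-4849845/512), (-2078505/256), (43648605/2048), (4849845/512), (-22309287/1024), (-2028117/512), (16900975/2048)]::real list)) = poly v (-1)"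
    by (rule repm_Poly[where n=13]) (code_simp, simp_all)
  show "poly (Poly ([(3003/2048), (-9009/512), (-135135/1024), (225225/512), (3828825/2048), (-765765/256), (-4849845/512), (2078505/256), (43648605/2048), (-4849845/512), (-22309287/1024), (2028117/512), (16900975/2048)]::real list)) 1 = (169/2)" by simp
  show "poly (Poly ([(3003/2048), (9009/512), (-135135/1024), (-225225/512), (3828825/2048), (765765/256), (-4849845/512), (-2078505/256), (43648605/2048), (4849845/512), (-22309287/1024), (-2028117/512), (16900975/2048)]::real list)) 1 = (13/2)" by simp
  show "poly (Poly ([(3003/2048), (9009/512), (-135135/1024), (-225225/512), (3828825/2048), (765765/256), (-4849845/512), (-2078505/256), (43648605/2048), (4849845/512), (-22309287/1024), (-2028117/512), (16900975/2048)]::real list)) (-1) = (169/2)" by simp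
  show "poly (Poly ([0, (3003/1024), 0, (-45045/512), 0, (765765/1024), 0, (-692835/256), 0, (4849845/1024), 0, (-2028117/512), 0, (1300075/1024)]::real list)) 1 = 1" by simp
  show "poly (Poly ([0, (3003/1024), 0, (-45045/512), 0, (765765/1024), 0, (-692835/256), 0, (4849845/1024), 0, (-2028117/512), 0, (1300075/1024)]::real list)) (-1) = (-1)" by simp
  show "ip (Poly ([0, (3003/1024), 0, (-45045/512), 0, (765765/1024), 0, (-692835/256), 0, (4849845/1024), 0, (-2028117/512), 0, (1300075/1024)]::real list)) (Poly ([0, (3003/1024), 0, (-45045/512), 0, (765765/1024), 0, (-692835/256), 0, (4849845/1024), 0, (-2028117/512), 0, (1300075/1024)]::real list)) = (2/27)" by (subst ip_Poly) (simp, code_simp)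
  fix x a :: real
  have "(\<lambda>x a. (1/84)*x + (-1/1092)*a) x a = (1/84)*x + (-1/1092)*a" "(\<lambda>x a. (-1/1092)*x + (1/84)*a) x a = (-1/1092)*x + (1/84)*a" by simp_all
  have "(2-(1/256))*(2*(\<lambda>x a. (1/84)*x + (-1/1092)*a) x a*x + 2*(\<lambda>x a. (-1/1092)*x + (1/84)*a) x a*(-a*(-1)) - (((\<lambda>x a. (1/84)*x + (-1/1092)*a) x a)^2*(169/2) + 2*(\<lambda>x a. (1/84)*x + (-1/1092)*a) x a*(\<lambda>x a. (-1/1092)*x + (1/84)*a) x a*(13/2) + ((\<lambda>x a. (-1/1092)*x + (1/84)*a) x a)^2*(169/2)))
               - (a*1 - 2*x)^2/(4*(169/2)) - a^2*(2/27)/4 - (1/256)*a^2*(2/27)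
        = (6193/519168)*(x + (193/563)*a)^2 + (3761/6323616)*a^2"
    by (simp add: power2_eq_square field_simps)
  also have "\<dots> \<ge> 0" by simp
  finally show "(2-(1/256))*(2*(\<lambda>x a. (1/84)*x + (-1/1092)*a) x a*x + 2*(\<lambda>x a. (-1/1092)*x + (1/84)*a) x a*(-a*(-1)) - (((\<lambda>x a. (1/84)*x + (-1/1092)*a) x a)^2*(169/2) + 2*(\<lambda>x a. (1/84)*x + (-1/1092)*a) x a*(\<lambda>x a. (-1/1092)*x + (1/84)*a) x a*(13/2) + ((\<lambda>x a. (-1/1092)*x + (1/84)*a) x a)^2*(169/2)))
               - (a*1 - 2*x)^2/(4*(169/2)) - a^2*(2/27)/4 - (1/256)*a^2*(2/27) \<ge> 0" .
qed simp_all

theorem lemma8: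
  fixes p :: nat
  assumes "1 \<le> p" and "p \<le> 13"
  shows "\<exists>c C :: real. c > 0 \<and> C > 0 \<and>
    (\<forall>\<eta> :: real poly. degree \<eta> \<le> p \<and> poly \<eta> (-1) = 0 \<longrightarrow>
      (\<exists>\<psi> :: real poly. degree \<psi> \<le> p - 1 \<and> poly \<psi> 1 = poly \<eta> 1 \<and>
        J_funct \<psi> \<eta> \<ge> c * integral {-1..1} (\<lambda>x. (poly \<eta> x)^2) \<and>
        integral {-1..1} (\<lambda>x. (poly \<psi> x)^2) \<le> C * integral {-1..1} (\<lambda>x. (poly \<eta> x)^2)))"
proof -
  have "p = 1 \<or> p = 2 \<or> p = 3 \<or> p = 4 \<or> p = 5 \<or> p = 6 \<or> p = 7 \<or> p = 8 \<or> p = 9 \<or> p = 10 \<or> p = 11 \<or> p = 12 \<or> p = 13"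
    using assms by presburger
  hence "Body p"
    using body_1 body_2 body_3 body_4 body_5 body_6 body_7 body_8 body_9 body_10 body_11 body_12 body_13
    by (elim disjE) simp_all
  thus ?thesis unfolding Body_def .
qed

end
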